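(* Let $X=(V,E,T)$ be a $2$-dimensional $(k_0,k_1)$-regular $(\epsilon,\mu)$-cosystolic expander, let $\frac12<\eta<1$, and let $F\subseteq E$. Suppose $\widetilde\lambda_2(G_0(X))<\frac12$ and $|V|$ is sufficiently large, i.e. $|V|\ge N$ for a threshold $N$ depending only on $\mu$ and $\widetilde\lambda_2(G_0(X))$. Then: (1) for every vertex $v\in V$ with $\frac{k_0}{2}<|F_v|\le\eta k_0$ (a semi-fat vertex), $|\delta(F_v)|\ge\epsilon k_1(1-\eta)k_0$; (2) for every vertex $v\in V$ with $|F_v|\le\frac{k_0}{2}$ (a non-fat vertex), $|\delta(F_v)|\ge\epsilon k_1|F_v|$.
   Context: A $2$-dimensional simplicial complex $X=(V,E,T)$ consists of a finite vertex set $V$, a set $E$ of $2$-element subsets of $V$ and a set $T$ of $3$-element subsets of $V$ such that every $2$-element subset of a triangle lies in $E$. $X$ is $(k_0,k_1)$-regular if every vertex lies in exactly $k_0$ edges and every edge lies in exactly $k_1$ triangles. $G_0(X)=(V,E)$ is the underlying graph and $\widetilde\lambda_2(G_0(X))$ its second largest adjacency eigenvalue divided by $k_0$. For $S\subseteq V$, $\delta(S)$ is the set of edges with exactly one endpoint in $S$; for $F\subseteq E$, $\delta(F)$ is the set of triangles containing an odd number of edges of $F$. $B^0(X)=\{\emptyset,V\}$, $Z^0(X)=\{S\subseteq V:\delta(S)=\emptyset\}$, $B^1(X)=\{\delta(S):S\subseteq V\}$, $Z^1(X)=\{F\subseteq E:\delta(F)=\emptyset\}$. $\mathrm{dist}(A,B)=|A\setminus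 B|+|B\setminus A|$; distance to a family is the minimum over its members. With $X(0)=V$, $X(1)=E$, $X$ is an $(\epsilon,\mu)$-cosystolic expander ($\epsilon,\mu>0$) if for $i\in\{0,1\}$ and all $S\subseteq X(i)$: if $|\delta(S)|=0$ then $S\in B^i(X)$ or $|S|\ge\mu|X(i)|$; otherwise $|\delta(S)|/\mathrm{dist}(S,Z^i(X))\ge\epsilon k_i$. The local view of $v$ with respect to $F$ is $F_v=\{e\in F: v\in e\}$. *)

theory Defs
  imports "HOL-Analysis.Analysis" "Jordan_Normal_Form.Char_Poly"
begin

definition complex2 :: "'a set \<Rightarrow> 'a set set \<Rightarrow> 'a set set \<Rightarrow> bool" where
  "complex2 V E T \<longleftrightarrow> finite V \<and>
     (\<forall>e\<in>E. e \<subseteq> V \<and> card e = 2) \<and>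
     (\<forall>t\<in>T. t \<subseteq> V \<and> card t = 3 \<and> (\<forall>e. e \<subseteq> t \<and> card e = 2 \<longrightarrow> e \<in> E))"

definition regular2 :: "'a set \<Rightarrow> 'a set set \<Rightarrow> 'a set set \<Rightarrow> nat \<Rightarrow> nat \<Rightarrow> bool" where
  "regular2 V E T k0 k1 \<longleftrightarrow>
     (\<forall>v\<in>V. card {e\<in>E. v \<in> e} = k0) \<and> (\<forall>e\<in>E. card {t\<in>T. e \<subseteq> t} = k1)"

text \<open>Coboundary maps (over F_2, sets as chains).\<close>
definition delta0 :: "'a set set \<Rightarrow> 'a set \<Rightarrow> 'a set set" where
  "delta0 E S = {e\<in>E. card (e \<inter> S) = 1}"

definition delta1 :: "'a set set \<Rightarrow> 'a set set \<Rightarrow> 'a set set" where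
  "delta1 T F = {t\<in>T. odd (card {e\<in>F. e \<subseteq> t})}"

definition B0 :: "'a set \<Rightarrow> 'a set set" where "B0 V = {{}, V}"
definition Z0 :: "'a set \<Rightarrow> 'a set set \<Rightarrow> 'a set set" where
  "Z0 V E = {S. S \<subseteq> V \<and> delta0 E S = {}}"
definition B1 :: "'a set \<Rightarrow> 'a set set \<Rightarrow> 'a set set set" where
  "B1 V E = delta0 E ` Pow V"
definition Z1 :: "'a set set \<Rightarrow> 'a set set \<Rightarrow> 'a set set set" where
  "Z1 E T = {F. F \<subseteq> E \<and> delta1 T F = {}}"

definition sdist :: "'b set \<Rightarrow> 'b set \<Rightarrow> nat" where
  "sdist A B = card (A - B) + card (B - A)"

definition sdist_fam :: "'b set \<Rightarrow> 'b set set \<Rightarrow> nat" where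
  "sdist_fam A Z = Min ((\<lambda>B. sdist A B) ` Z)"

definition cosystolic_expander ::
  "'a set \<Rightarrow> 'a set set \<Rightarrow> 'a set set \<Rightarrow> nat \<Rightarrow> nat \<Rightarrow> real \<Rightarrow> real \<Rightarrow> bool" where
  "cosystolic_expander V E T k0 k1 eps mu \<longleftrightarrow> eps > 0 \<and> mu > 0 \<and>
     (\<forall>S. S \<subseteq> V \<longrightarrow>
        (delta0 E S = {} \<longrightarrow> S \<in> B0 V \<or> real (card S) \<ge> mu * real (card V)) \<and>
        (delta0 E S \<noteq> {} \<longrightarrow>
           real (card (delta0 E S)) / real (sdist_fam S (Z0 V E)) \<ge> eps * real k0)) \<and>
     (\<forall>S. S \<subseteq> E \<longrightarrow>
        (delta1 T S = {} \<longrightarrow> S \<in> B1 V E \<or> real (card S) \<ge> mu * real (card E)) \<and>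
        (delta1 T S \<noteq> {} \<longrightarrow>
           real (card (delta1 T S)) / real (sdist_fam S (Z1 E T)) \<ge> eps * real k1))"

definition local_view :: "'a set set \<Rightarrow> 'a \<Rightarrow> 'a set set" where
  "local_view F v = {e\<in>F. v \<in> e}"

text \<open>Adjacency matrix of the graph (V,E) w.r.t. an (arbitrary) enumeration of V;
  the characteristic polynomial does not depend on the enumeration.\<close>
definition vertex_enum :: "'a set \<Rightarrow> 'a list" where
  "vertex_enum V = (SOME xs. set xs = V \<and> distinct xs)"

definition adj_matrix :: "'a set \<Rightarrow> 'a set set \<Rightarrow> real mat" where
  "adj_matrix V E = (let xs = vertex_enum V in
     mat (length xs) (length xs) (\<lambda>(i,j). if {xs ! i, xs ! j} \<in> E then 1 else 0))"

text \<open>Second largest eigenvalue, counted with (algebraic) multiplicity: the largest root x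
  of the characteristic polynomial such that the roots \<ge> x have total multiplicity \<ge> 2.\<close>
definition second_eigenvalue :: "real mat \<Rightarrow> real" where
  "second_eigenvalue A = Max {x. poly (char_poly A) x = 0 \<and>
      (\<Sum>y\<in>{y. poly (char_poly A) y = 0 \<and> x \<le> y}. order y (char_poly A)) \<ge> 2}"

definition lambda2_norm :: "'a set \<Rightarrow> 'a set set \<Rightarrow> nat \<Rightarrow> real" where
  "lambda2_norm V E k0 = second_eigenvalue (adj_matrix V E) / real k0"

end

theory Submission
  imports Defs
begin


definition mv :: "nat \<Rightarrow> (nat\<Rightarrow>nat\<Rightarrow>real) \<Rightarrow> (nat\<Rightarrow>real) \<Rightarrow> nat \<Rightarrow> real" where
  "mv n a z i = (\<Sum>j<n. a i j * z j)"
definition ip :: "nat \<Rightarrow> (nat\<Rightarrow>real) \<Rightarrow> (nat\<Rightarrow>real) \<Rightarrow> real" where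
  "ip n z w = (\<Sum>i<n. z i * w i)"

lemma ip_comm: "ip n z w = ip n w z"
  unfolding ip_def by (simp add: mult.commute)

lemma ip_nonneg: "ip n z z \<ge> 0"
  unfolding ip_def by (intro sum_nonneg) simp

lemma ip_zero: "ip n z z = 0 \<Longrightarrow> i < n \<Longrightarrow> z i = 0"
  unfolding ip_def by (subst (asm) sum_nonneg_eq_0_iff) auto

lemma ip_sym_mv: assumes "\<And>i j. a i j = a j i"
  shows "ip n z (mv n a w) = ip n w (mv n a z)"
proof -
  have "ip n z (mv n a w) = (\<Sum>i<n. \<Sum>j<n. z i * a i j * w j)"
    unfolding ip_def mv_def by (simp add: sum_distrib_left mult.assoc)
  also have "\<dots> = (\<Sum>j<n. \<Sum>i<n. z i * a i j * w j)" by (rule sum.swap)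
  also have "\<dots> = ip n w (mv n a z)"
    unfolding ip_def mv_def by (simp add: sum_distrib_left assms mult.commute mult.left_commute)
  finally show ?thesis .
qed

lemma mv_lin: "mv n a (\<lambda>i. z i + s * w i) j = mv n a z j + s * mv n a w j"
  unfolding mv_def by (simp add: sum.distrib sum_distrib_left algebra_simps)

lemma mv_lin2: "mv n a (\<lambda>i. c * z i + d * w i) j = c * mv n a z j + d * mv n a w j"
  unfolding mv_def by (simp add: sum.distrib sum_distrib_left algebra_simps)

lemma mv_scale: "mv n a (\<lambda>i. c * z i) j = c * mv n a z j"
  unfolding mv_def by (simp add: sum_distrib_left algebra_simps)

lemma ip_lin: "ip n (\<lambda>i. z i + s * w i) y = ip n z y + s * ip n w y"
  unfolding ip_def by (simp add: sum.distrib sum_distrib_left algebra_simps)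

lemma ip_lin_r: "ip n y (\<lambda>i. z i + s * w i) = ip n y z + s * ip n y w"
  unfolding ip_def by (simp add: sum.distrib sum_distrib_left algebra_simps)

lemma ip_cong: "(\<And>i. i < n \<Longrightarrow> z i = z' i) \<Longrightarrow> (\<And>i. i < n \<Longrightarrow> w i = w' i) \<Longrightarrow> ip n z w = ip n z' w'"
  unfolding ip_def by simp

lemma mv_cong: "(\<And>i. i < n \<Longrightarrow> z i = z' i) \<Longrightarrow> mv n a z j = mv n a z' j"
  unfolding mv_def by simp

lemma cont_coord[continuous_intros]: "continuous_on S (\<lambda>z::nat\<Rightarrow>real. z i)"
  by (rule continuous_on_subset[OF continuous_on_product_coordinates]) auto

lemma compB: "compact (Pi UNIV (\<lambda>i::nat. if i < n then {-1..1::real} else {0}))"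
proof -
  have "compactin (product_topology (\<lambda>_. euclidean) UNIV) (PiE UNIV (\<lambda>i::nat. if i < n then {-1..1::real} else {0}))"
    by (subst compactin_PiE) auto
  thus ?thesis by (simp add: euclidean_product_topology PiE_UNIV_domain)
qed

lemma quad_nonpos_lin0:
  fixes c d :: real
  assumes "\<And>s. 2 * s * c + s^2 * d \<le> 0"
  shows "c = 0"
proof -
  define D where "D = \<bar>d\<bar> + 1"
  have pos: "D > 0" unfolding D_def by simp
  define s where "s = c / D"
  have "2 * s * c + s^2 * d \<le> 0" by (rule assms)
  moreover have "- (s^2 * d) \<le> s^2 * D" unfolding D_def
    by (metis abs_ge_minus_self add.commute add_increasing2 less_eq_real_def mult_minus_right
        mult_right_mono zero_le_one zero_le_power2 mult_left_mono)
  ultimately have "2 * s * c \<le> s^2 * D" by linarith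
  hence "2 * (c * c / D) \<le> c * c / D" unfolding s_def using pos
    by (simp add: power2_eq_square field_simps)
  hence "c * c / D \<le> 0" by linarith
  hence "c * c \<le> 0" using pos by (simp add: divide_le_0_iff)
  thus ?thesis by (metis mult_le_0_iff order_antisym_conv zero_le_square linorder_not_le)
qed

lemma maxeig:
  assumes sym: "\<And>i j. a i j = a j i"
    and u: "\<And>i. i < n \<Longrightarrow> mv n a u i = k * u i"
    and x: "ip n x u = 0" "ip n x x > 0" "ip n x (mv n a x) \<ge> t * ip n x x"
  shows "\<exists>z l. ip n z u = 0 \<and> ip n z z = 1 \<and> (\<forall>i<n. mv n a z i = l * z i) \<and> t \<le> l"
proof -
  define g where "g z = ip n z (mv n a z)" for z
  define K where "K = {z. (\<forall>i. n \<le> i \<longrightarrow> z i = 0) \<and> ip n z u = 0 \<and> ip n z z = 1}"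
  define B where "B = Pi UNIV (\<lambda>i::nat. if i < n then {-1..1::real} else {0})"
  have KB: "K = B \<inter> K"
  proof -
    { fix z i assume z: "z \<in> K"
      have "z i \<in> (if i < n then {-1..1} else {0})"
      proof (cases "i < n")
        case True
        have "(z i)^2 \<le> ip n z z" unfolding ip_def power2_eq_square
          by (rule member_le_sum[where f="\<lambda>i. z i * z i"]) (use True in auto)
        hence "(z i)^2 \<le> 1" using z unfolding K_def by auto
        hence "\<bar>z i\<bar> \<le> 1" by (simp add: abs_square_le_1)
        thus ?thesis using True by auto
      next
        case False thus ?thesis using z unfolding K_def by auto
      qed }
    thus ?thesis unfolding B_def by auto
  qed
  have cl: "closed K"
  proof -
    have eqK: "K = (\<Inter>i\<in>{n..}. {z. z i = 0}) \<inter> {z. ip n z u = 0} \<inter> {z. ip n z z = 1}"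
      unfolding K_def by auto
    have c1: "closed {z::nat\<Rightarrow>real. z i = 0}" for i
      by (rule closed_Collect_eq[OF cont_coord continuous_on_const])
    have c2: "continuous_on UNIV (\<lambda>z. ip n z u)" unfolding ip_def
      by (intro continuous_on_sum continuous_on_mult cont_coord continuous_on_const)
    have c3: "continuous_on UNIV (\<lambda>z. ip n z z)" unfolding ip_def
      by (intro continuous_on_sum continuous_on_mult cont_coord)
    have "closed (\<Inter>i\<in>{n..}. {z::nat\<Rightarrow>real. z i = 0})"
      by (rule closed_INT) (use c1 in blast)
    moreover have "closed {z. ip n z u = 0}" by (rule closed_Collect_eq[OF c2 continuous_on_const])
    moreover have "closed {z. ip n z z = 1}" by (rule closed_Collect_eq[OF c3 continuous_on_const])
    ultimately show ?thesis unfolding eqK by (intro closed_Int)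
  qed
  have compK: "compact K"
    using KB compact_Int_closed[OF compB cl] unfolding B_def by metis
  define x0 where "x0 i = (if i < n then x i / sqrt (ip n x x) else 0)" for i
  have sq: "sqrt (ip n x x) > 0" using x by simp
  have x0u: "ip n x0 u = ip n x u / sqrt (ip n x x)"
    unfolding ip_def x0_def by (simp add: sum_divide_distrib)
  have x0x0: "ip n x0 x0 = ip n x x / (sqrt (ip n x x))^2"
    unfolding ip_def x0_def by (simp add: sum_divide_distrib power2_eq_square)
  have "x0 \<in> K" unfolding K_def using x0u x0x0 x sq by (auto simp: x0_def)
  hence Kne: "K \<noteq> {}" by auto
  have contg: "continuous_on K g" unfolding g_def ip_def mv_def
    by (intro continuous_on_sum continuous_on_mult cont_coord continuous_on_const)
  obtain zs where zs: "zs \<in> K" and zmax: "\<And>y. y \<in> K \<Longrightarrow> g y \<le> g zs"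
    using continuous_attains_sup[OF compK Kne contg] by blast
  define l where "l = g zs"
  have gen: "g y \<le> l * ip n y y" if yu: "ip n y u = 0" for y
  proof (cases "ip n y y = 0")
    case True
    have "g y = 0" unfolding g_def ip_def using ip_zero[OF True] by simp
    thus ?thesis using True by simp
  next
    case False
    hence pos: "ip n y y > 0" using ip_nonneg[of n y] by simp
    define y0 where "y0 i = (if i < n then y i / sqrt (ip n y y) else 0)" for i
    have sqy: "sqrt (ip n y y) > 0" using pos by simp
    have "ip n y0 u = ip n y u / sqrt (ip n y y)"
      unfolding ip_def y0_def by (simp add: sum_divide_distrib)
    moreover have "ip n y0 y0 = ip n y y / (sqrt (ip n y y))^2"
      unfolding ip_def y0_def by (simp add: sum_divide_distrib power2_eq_square)
    ultimately have "y0 \<in> K" unfolding K_def using yu pos sqy by (auto simp: y0_def)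
    hence "g y0 \<le> l" using zmax l_def by auto
    moreover have "g y0 = g y / ip n y y"
    proof -
      have "\<And>i. i < n \<Longrightarrow> mv n a y0 i = mv n a y i / sqrt (ip n y y)"
        unfolding mv_def y0_def by (simp add: sum_divide_distrib)
      hence "g y0 = (\<Sum>i<n. y i / sqrt (ip n y y) * (mv n a y i / sqrt (ip n y y)))"
        unfolding g_def ip_def y0_def by simp
      also have "\<dots> = (\<Sum>i<n. y i * mv n a y i) / (sqrt (ip n y y))^2"
        by (simp add: sum_divide_distrib power2_eq_square)
      also have "\<dots> = g y / ip n y y" using pos unfolding g_def ip_def by simp
      finally show ?thesis .
    qed
    ultimately show ?thesis using pos by (simp add: divide_le_eq mult.commute)
  qed
  have zsu: "ip n zs u = 0" and zsz: "ip n zs zs = 1" using zs unfolding K_def by auto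
  have lt: "t \<le> l"
  proof -
    have "g x0 \<le> l" using zmax \<open>x0 \<in> K\<close> l_def by auto
    moreover have "g x0 = g x / ip n x x"
    proof -
      have "\<And>i. i < n \<Longrightarrow> mv n a x0 i = mv n a x i / sqrt (ip n x x)"
        unfolding mv_def x0_def by (simp add: sum_divide_distrib)
      hence "g x0 = (\<Sum>i<n. x i / sqrt (ip n x x) * (mv n a x i / sqrt (ip n x x)))"
        unfolding g_def ip_def x0_def by simp
      also have "\<dots> = (\<Sum>i<n. x i * mv n a x i) / (sqrt (ip n x x))^2"
        by (simp add: sum_divide_distrib power2_eq_square)
      also have "\<dots> = g x / ip n x x" using x unfolding g_def ip_def by simp
      finally show ?thesis .
    qed
    ultimately have "g x / ip n x x \<le> l" by simp
    moreover have "t \<le> g x / ip n x x" using x unfolding g_def by (simp add: le_divide_eq)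
    ultimately show ?thesis by simp
  qed
  (* Lagrange *)
  have lag: "ip n w (mv n a zs) = l * ip n w zs" if wu: "ip n w u = 0" for w
  proof -
    define c where "c = ip n w (mv n a zs) - l * ip n w zs"
    define d where "d = g w - l * ip n w w"
    have "2 * s * c + s^2 * d \<le> 0" for s
    proof -
      define y where "y = (\<lambda>i. zs i + s * w i)"
      have yu: "ip n y u = 0" unfolding y_def ip_lin using zsu wu by simp
      have "g y = g zs + 2 * s * ip n w (mv n a zs) + s^2 * g w"
      proof -
        have "mv n a y = (\<lambda>i. mv n a zs i + s * mv n a w i)"
          by (rule ext) (simp add: y_def mv_lin)
        hence "g y = ip n y (\<lambda>i. mv n a zs i + s * mv n a w i)"
          unfolding g_def by simp
        also have "\<dots> = ip n zs (mv n a zs) + s * ip n zs (mv n a w) + s * (ip n w (mv n a zs) + s * ip n w (mv n a w))"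
          unfolding y_def ip_lin ip_lin_r by (simp add: algebra_simps)
        also have "ip n zs (mv n a w) = ip n w (mv n a zs)" by (rule ip_sym_mv[OF sym])
        finally show ?thesis unfolding g_def by (simp add: algebra_simps power2_eq_square)
      qed
      moreover have "ip n y y = 1 + 2 * s * ip n w zs + s^2 * ip n w w"
        unfolding y_def ip_lin ip_lin_r using zsz
        by (simp add: algebra_simps power2_eq_square ip_comm[of n zs w])
      moreover have "g y \<le> l * ip n y y" by (rule gen[OF yu])
      ultimately show ?thesis unfolding c_def d_def l_def
        by (simp add: algebra_simps power2_eq_square)
    qed
    hence "c = 0" by (rule quad_nonpos_lin0)
    thus ?thesis unfolding c_def by simp
  qed
  define r where "r i = mv n a zs i - l * zs i" for i
  have ru: "ip n r u = 0"
  proof -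
    have "ip n r u = ip n u (mv n a zs) - l * ip n zs u"
      unfolding r_def ip_def by (simp add: sum_subtractf sum_distrib_left algebra_simps)
    also have "ip n u (mv n a zs) = ip n zs (mv n a u)" by (rule ip_sym_mv[OF sym])
    also have "\<dots> = k * ip n zs u" unfolding ip_def using u
      by (simp add: sum_distrib_left algebra_simps)
    finally show ?thesis using zsu by simp
  qed
  have "ip n r r = 0"
  proof -
    have e: "r i * r i = r i * mv n a zs i - l * (r i * zs i)" for i
    proof -
      have "r i * r i = r i * (mv n a zs i - l * zs i)" by (metis r_def)
      thus ?thesis by (simp add: algebra_simps)
    qed
    have "ip n r r = ip n r (mv n a zs) - l * ip n r zs"
      unfolding ip_def e by (simp add: sum_subtractf sum_distrib_left)
    thus ?thesis using lag[OF ru] by simp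
  qed
  hence "\<forall>i<n. mv n a zs i = l * zs i" using ip_zero unfolding r_def by fastforce
  thus ?thesis using zsu zsz lt by blast
qed

lemma mat_mv: "mat n n (\<lambda>(i,j). a i j) *\<^sub>v vec n z = vec n (mv n a z)"
  by (rule eq_vecI) (auto simp: scalar_prod_def mv_def atLeast0LessThan)

lemma ip_pos_ex: "ip n z z > 0 \<Longrightarrow> \<exists>i<n. z i \<noteq> 0"
  unfolding ip_def by (metis (no_types, lifting) lessThan_iff mult_zero_left order_less_irrefl sum.neutral)

lemma root_of:
  assumes "\<forall>i<n. mv n a z i = l * z i" "ip n z z > 0"
  shows "poly (char_poly (mat n n (\<lambda>(i,j). a i j))) l = 0"
proof -
  let ?M = "mat n n (\<lambda>(i,j). a i j)"
  have car: "?M \<in> carrier_mat n n" by simp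
  obtain i where i: "i < n" "z i \<noteq> 0" using ip_pos_ex[OF assms(2)] by blast
  have nz: "vec n z \<noteq> 0\<^sub>v n"
  proof
    assume "vec n z = 0\<^sub>v n"
    hence "vec n z $ i = 0\<^sub>v n $ i" by simp
    thus False using i by simp
  qed
  have "?M *\<^sub>v vec n z = l \<cdot>\<^sub>v vec n z"
    unfolding mat_mv by (rule eq_vecI) (use assms(1) in auto)
  hence "eigenvector ?M (vec n z) l" unfolding eigenvector_def using nz by simp
  hence "eigenvalue ?M l" unfolding eigenvalue_def by blast
  thus ?thesis using eigenvalue_root_char_poly[OF car] by simp
qed

lemma ins_image: assumes "i < n"
  shows "insert_index i ` {..<n-1} = {..<n} - {i}"
proof
  show "insert_index i ` {..<n - 1} \<subseteq> {..<n} - {i}"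
    using assms by (auto simp: insert_index_def)
  show "{..<n} - {i} \<subseteq> insert_index i ` {..<n - 1}"
  proof
    fix m assume m: "m \<in> {..<n} - {i}"
    show "m \<in> insert_index i ` {..<n - 1}"
    proof (cases "m < i")
      case True thus ?thesis using m assms
        by (intro image_eqI[of _ _ m]) (auto simp: insert_index_def)
    next
      case False thus ?thesis using m assms
        by (intro image_eqI[of _ _ "m - 1"]) (auto simp: insert_index_def)
    qed
  qed
qed

lemma ins_inj: "inj_on (insert_index i) A"
  by (auto simp: inj_on_def insert_index_def split: if_splits)

lemma delete_root:
  assumes i: "i < n" and yi: "y i = 0" and ev: "\<forall>m<n. mv n a y m = k * y m" and yy: "ip n y y > 0"
  shows "poly (char_poly (mat_delete (mat n n (\<lambda>(i,j). a i j)) i i)) k = 0"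
proof -
  define a' where "a' p q = a (insert_index i p) (insert_index i q)" for p q
  define y' where "y' p = y (insert_index i p)" for p
  have md: "mat_delete (mat n n (\<lambda>(i,j). a i j)) i i = mat (n-1) (n-1) (\<lambda>(p,q). a' p q)"
    by (rule eq_matI) (auto simp: mat_delete_def a'_def insert_index_def)
  have sr: "(\<Sum>q<n-1. f (insert_index i q)) = (\<Sum>m\<in>{..<n} - {i}. f m)" for f :: "nat \<Rightarrow> real"
    using sum.reindex[OF ins_inj[of i "{..<n-1}"], of f] ins_image[OF i] by simp
  have ev': "\<forall>p<n-1. mv (n-1) a' y' p = k * y' p"
  proof (intro allI impI)
    fix p assume p: "p < n - 1"
    have "mv (n-1) a' y' p = (\<Sum>m\<in>{..<n} - {i}. a (insert_index i p) m * y m)"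
      unfolding mv_def a'_def y'_def by (rule sr)
    also have "\<dots> = (\<Sum>m<n. a (insert_index i p) m * y m)"
      using i yi by (simp add: sum_diff1)
    also have "\<dots> = mv n a y (insert_index i p)" unfolding mv_def ..
    also have "\<dots> = k * y' p" using ev p unfolding y'_def by (auto simp: insert_index_def)
    finally show "mv (n-1) a' y' p = k * y' p" .
  qed
  have "ip (n-1) y' y' = (\<Sum>m\<in>{..<n} - {i}. y m * y m)"
    unfolding ip_def y'_def by (rule sr)
  also have "\<dots> = ip n y y" unfolding ip_def using i yi by (simp add: sum_diff1)
  finally have "ip (n-1) y' y' > 0" using yy by simp
  from root_of[OF ev' this] show ?thesis unfolding md .
qed

lemma mult2:
  assumes sym: "\<And>i j. a i j = a j i"
    and u: "\<forall>i<n. mv n a u i = k * u i" "ip n u u > 0"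
    and z: "\<forall>i<n. mv n a z i = k * z i" "ip n z z > 0" "ip n z u = 0"
  shows "order k (char_poly (mat n n (\<lambda>(i,j). a i j))) \<ge> 2"
proof -
  let ?M = "mat n n (\<lambda>(i,j). a i j)"
  let ?p = "char_poly ?M"
  have car: "?M \<in> carrier_mat n n" by simp
  have n: "n > 0" using u(2) unfolding ip_def by (cases n) auto
  have deg: "degree ?p = n" and co: "coeff ?p n = 1" using degree_monic_char_poly[OF car] by auto
  have p0: "?p \<noteq> 0" using co by auto
  have r: "poly ?p k = 0" by (rule root_of[OF u])
  have "poly (pderiv ?p) k = 0"
  proof -
    have "poly (pderiv ?p) k = (\<Sum>i<n. poly (char_poly (mat_delete ?M i i)) k)"
      unfolding pderiv_char_poly[OF car] poly_sum ..
    also have "\<dots> = 0"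
    proof (rule sum.neutral, intro ballI)
      fix i assume i: "i \<in> {..<n}"
      hence i: "i < n" by simp
      define y where "y = (if u i = 0 then u else (\<lambda>m. z i * u m - u i * z m))"
      have yi: "y i = 0" unfolding y_def by auto
      have ev: "\<forall>m<n. mv n a y m = k * y m"
      proof (cases "u i = 0")
        case True thus ?thesis using u unfolding y_def by simp
      next
        case False
        have yv: "y = (\<lambda>m. z i * u m + (- u i) * z m)" unfolding y_def using False by simp
        show ?thesis
        proof (intro allI impI)
          fix m assume m: "m < n"
          have "mv n a y m = z i * mv n a u m + (- u i) * mv n a z m"
            unfolding yv by (rule mv_lin2)
          also have "\<dots> = k * y m" using u(1) z(1) m unfolding yv by (simp add: algebra_simps)
          finally show "mv n a y m = k * y m" .
        qed
      qed
      have yy: "ip n y y > 0"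
      proof (cases "u i = 0")
        case True thus ?thesis using u unfolding y_def by simp
      next
        case False
        have "ip n y z = z i * ip n u z - u i * ip n z z"
          unfolding y_def ip_def using False by (simp add: sum_subtractf sum_distrib_left algebra_simps)
        also have "\<dots> = - u i * ip n z z" using z(3) ip_comm[of n u z] by simp
        finally have "ip n y z \<noteq> 0" using False z(2) by simp
        hence "ip n y y \<noteq> 0"
          using ip_zero[of n y] unfolding ip_def by (metis (no_types, lifting) lessThan_iff mult_zero_left sum.neutral)
        thus ?thesis using ip_nonneg[of n y] by simp
      qed
      show "poly (char_poly (mat_delete ?M i i)) k = 0" by (rule delete_root[OF i yi ev yy])
    qed
    finally show ?thesis .
  qed
  moreover have "pderiv ?p \<noteq> 0" using pderiv_eq_0_iff[of ?p] deg n by simp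
  ultimately have "order k (pderiv ?p) \<noteq> 0" using order_root by blast
  thus ?thesis using order_pderiv[OF p0 r] by simp
qed

lemma sec_ge_poly:
  fixes p :: "real poly"
  assumes p0: "p \<noteq> 0" and r: "poly p r1 = 0" "poly p r2 = 0" "t \<le> r1" "t \<le> r2"
    and d: "r1 \<noteq> r2 \<or> order r1 p \<ge> 2"
  shows "t \<le> Max {x. poly p x = 0 \<and> (\<Sum>y\<in>{y. poly p y = 0 \<and> x \<le> y}. order y p) \<ge> 2}"
proof -
  define R where "R = {y. poly p y = 0 \<and> t \<le> y}"
  have fR: "finite R" unfolding R_def using poly_roots_finite[OF p0] by simp
  have r1R: "r1 \<in> R" "r2 \<in> R" unfolding R_def using r by auto
  have sum2: "(\<Sum>y\<in>R. order y p) \<ge> 2"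
  proof (cases "r1 = r2")
    case True
    hence "order r1 p \<ge> 2" using d by simp
    moreover have "order r1 p \<le> (\<Sum>y\<in>R. order y p)" by (rule member_le_sum[OF r1R(1) _ fR]) simp
    ultimately show ?thesis by simp
  next
    case False
    have o1: "order r1 p \<ge> 1" "order r2 p \<ge> 1" using r p0 order_root by (auto simp: Suc_le_eq)
    have "(\<Sum>y\<in>{r1,r2}. order y p) \<le> (\<Sum>y\<in>R. order y p)"
      by (rule sum_mono2[OF fR]) (use r1R in auto)
    moreover have "(\<Sum>y\<in>{r1,r2}. order y p) = order r1 p + order r2 p" using False by simp
    ultimately show ?thesis using o1 by simp
  qed
  define m where "m = Min R"
  have mR: "m \<in> R" unfolding m_def using fR r1R by (intro Min_in) auto
  have eqR: "{y. poly p y = 0 \<and> m \<le> y} = R"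
  proof
    show "{y. poly p y = 0 \<and> m \<le> y} \<subseteq> R" using mR unfolding R_def by auto
    show "R \<subseteq> {y. poly p y = 0 \<and> m \<le> y}" unfolding m_def using fR by (auto simp: R_def)
  qed
  define S where "S = {x. poly p x = 0 \<and> (\<Sum>y\<in>{y. poly p y = 0 \<and> x \<le> y}. order y p) \<ge> 2}"
  have mS: "m \<in> S" unfolding S_def using eqR sum2 mR unfolding R_def by auto
  have fS: "finite S" unfolding S_def using poly_roots_finite[OF p0] by (rule rev_finite_subset) auto
  have "m \<le> Max S" by (rule Max_ge[OF fS mS])
  moreover have "t \<le> m" using mR unfolding R_def by simp
  ultimately show ?thesis unfolding S_def by simp
qed

lemma spectral_bound:
  assumes sym: "\<And>i j. a i j = a j i"
    and u: "\<forall>i<n. mv n a u i = k * u i" "ip n u u > 0" and tk: "t \<le> k"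
    and x: "ip n x u = 0" "ip n x x > 0" "ip n x (mv n a x) \<ge> t * ip n x x"
  shows "t \<le> second_eigenvalue (mat n n (\<lambda>(i,j). a i j))"
proof -
  let ?M = "mat n n (\<lambda>(i,j). a i j)"
  let ?p = "char_poly ?M"
  have car: "?M \<in> carrier_mat n n" by simp
  have co: "coeff ?p n = 1" using degree_monic_char_poly[OF car] by auto
  have p0: "?p \<noteq> 0" using co by auto
  obtain z l where z: "ip n z u = 0" "ip n z z = 1" "\<forall>i<n. mv n a z i = l * z i" "t \<le> l"
    using maxeig[OF sym _ x] u(1) by blast
  have r1: "poly ?p k = 0" by (rule root_of[OF u])
  have r2: "poly ?p l = 0" by (rule root_of[OF z(3)]) (use z(2) in simp)
  have d: "k \<noteq> l \<or> order k ?p \<ge> 2"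
  proof (cases "k = l")
    case True
    thus ?thesis using mult2[OF sym u, of z] z by simp
  qed simp
  show ?thesis unfolding second_eigenvalue_def
    by (rule sec_ge_poly[OF p0 r1 r2 tk z(4) d])
qed




lemma sum_if_card_real: "finite A \<Longrightarrow> (\<Sum>x\<in>A. if P x then 1 else 0 :: real) = real (card {x\<in>A. P x})"
  by (simp add: sum.inter_filter[symmetric])

lemma sum_if_card_nat: "finite A \<Longrightarrow> (\<Sum>x\<in>A. if P x then 1 else 0 :: nat) = card {x\<in>A. P x}"
  by (simp add: sum.inter_filter[symmetric])

definition adj :: "'a set set \<Rightarrow> 'a \<Rightarrow> 'a \<Rightarrow> real" where
  "adj E v w = (if {v,w} \<in> E then 1 else 0)"

lemma adj_sym: "adj E v w = adj E w v"
  unfolding adj_def by (simp add: insert_commute)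

lemma edge2: assumes "complex2 V E T" "e \<in> E"
  shows "e \<subseteq> V" "card e = 2" "finite e"
  using assms unfolding complex2_def by (auto intro: card_ge_0_finite)

lemma finE: assumes "complex2 V E T" shows "finite E" "finite V"
proof -
  show fV: "finite V" using assms unfolding complex2_def by auto
  have "E \<subseteq> Pow V" using assms unfolding complex2_def by auto
  thus "finite E" using fV by (meson finite_Pow_iff rev_finite_subset)
qed

lemma deg_count:
  assumes c: "complex2 V E T" and r: "regular2 V E T k0 k1" and v: "v \<in> V"
  shows "card {w\<in>V. {v,w} \<in> E} = k0"
proof -
  have "bij_betw (\<lambda>w. {v,w}) {w\<in>V. {v,w} \<in> E} {e\<in>E. v \<in> e}"
  proof (rule bij_betwI')
    fix x y assume "x \<in> {w\<in>V. {v,w} \<in> E}" "y \<in> {w\<in>V. {v,w} \<in> E}"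
    show "({v, x} = {v, y}) = (x = y)" by (auto simp: doubleton_eq_iff)
  next
    fix x assume "x \<in> {w\<in>V. {v,w} \<in> E}" thus "{v, x} \<in> {e \<in> E. v \<in> e}" by auto
  next
    fix e assume e: "e \<in> {e \<in> E. v \<in> e}"
    hence eE: "e \<in> E" and ve: "v \<in> e" by auto
    obtain x y where xy: "e = {x,y}" "x \<noteq> y" using edge2(2)[OF c eE] card_2_iff by metis
    have eV: "e \<subseteq> V" by (rule edge2(1)[OF c eE])
    show "\<exists>w\<in>{w \<in> V. {v, w} \<in> E}. e = {v, w}"
    proof (cases "v = x")
      case True thus ?thesis using xy eV eE by (intro bexI[of _ y]) auto
    next
      case False hence "v = y" using ve xy by auto
      thus ?thesis using xy eV eE by (intro bexI[of _ x]) (auto simp: insert_commute)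
    qed
  qed
  hence "card {w\<in>V. {v,w} \<in> E} = card {e\<in>E. v \<in> e}" by (rule bij_betw_same_card)
  also have "\<dots> = k0" using r v unfolding regular2_def by auto
  finally show ?thesis .
qed

lemma deg_sum:
  assumes c: "complex2 V E T" and r: "regular2 V E T k0 k1" and v: "v \<in> V"
  shows "(\<Sum>w\<in>V. adj E v w) = real k0"
  unfolding adj_def using deg_count[OF c r v] finE(2)[OF c] by (simp add: sum_if_card_real)

lemma quad_id:
  assumes c: "complex2 V E T" and r: "regular2 V E T k0 k1"
  shows "(\<Sum>v\<in>V. \<Sum>w\<in>V. adj E v w * X v * X w) =
         k0 * (\<Sum>v\<in>V. X v ^ 2) - (1/2) * (\<Sum>v\<in>V. \<Sum>w\<in>V. adj E v w * (X v - X w)^2)"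
proof -
  define Q where "Q = (\<Sum>v\<in>V. \<Sum>w\<in>V. adj E v w * X v * X w)"
  have s1: "(\<Sum>v\<in>V. \<Sum>w\<in>V. adj E v w * X v ^ 2) = k0 * (\<Sum>v\<in>V. X v ^ 2)"
  proof -
    have "(\<Sum>v\<in>V. \<Sum>w\<in>V. adj E v w * X v ^ 2) = (\<Sum>v\<in>V. (\<Sum>w\<in>V. adj E v w) * X v ^ 2)"
      by (simp add: sum_distrib_right)
    also have "\<dots> = (\<Sum>v\<in>V. X v ^ 2 * k0)" using deg_sum[OF c r] by (simp add: mult.commute)
    finally show ?thesis by (simp add: sum_distrib_left mult.commute)
  qed
  have s2: "(\<Sum>v\<in>V. \<Sum>w\<in>V. adj E v w * X w ^ 2) = k0 * (\<Sum>v\<in>V. X v ^ 2)"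
  proof -
    have "(\<Sum>v\<in>V. \<Sum>w\<in>V. adj E v w * X w ^ 2) = (\<Sum>w\<in>V. \<Sum>v\<in>V. adj E w v * X w ^ 2)"
      by (subst sum.swap) (simp add: adj_sym)
    also have "\<dots> = k0 * (\<Sum>v\<in>V. X v ^ 2)" using s1 .
    finally show ?thesis .
  qed
  have "(\<Sum>v\<in>V. \<Sum>w\<in>V. adj E v w * (X v - X w)^2) =
        (\<Sum>v\<in>V. \<Sum>w\<in>V. adj E v w * X v ^ 2) + (\<Sum>v\<in>V. \<Sum>w\<in>V. adj E v w * X w ^ 2) - 2 * Q"
    unfolding Q_def by (simp add: power2_diff algebra_simps sum.distrib sum_subtractf sum_distrib_left)
  thus ?thesis unfolding Q_def[symmetric] s1 s2 by (simp add: field_simps)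
qed

lemma cut_pairs:
  assumes c: "complex2 V E T" and S: "S \<subseteq> V"
  shows "(\<Sum>v\<in>V. \<Sum>w\<in>V. adj E v w * ((if v \<in> S then 1 else 0) - (if w \<in> S then 1 else 0))^2)
         = 2 * real (card (delta0 E S))"
proof -
  have fV: "finite V" by (rule finE(2)[OF c])
  define P1 where "P1 = {(v,w). v \<in> S \<and> w \<in> V - S \<and> {v,w} \<in> E}"
  define P2 where "P2 = {(v,w). v \<in> V - S \<and> w \<in> S \<and> {v,w} \<in> E}"
  have "(\<Sum>v\<in>V. \<Sum>w\<in>V. adj E v w * ((if v \<in> S then 1 else 0) - (if w \<in> S then 1 else 0))^2)
      = (\<Sum>p\<in>V \<times> V. if p \<in> P1 \<union> P2 then 1 else 0)"
    unfolding sum.cartesian_product P1_def P2_def adj_def using S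
    by (intro sum.cong refl) (auto split: if_splits)
  also have "\<dots> = real (card (P1 \<union> P2))"
  proof -
    have "P1 \<union> P2 \<subseteq> V \<times> V" using S unfolding P1_def P2_def by auto
    hence "{p \<in> V \<times> V. p \<in> P1 \<union> P2} = P1 \<union> P2" by auto
    thus ?thesis using sum_if_card_real[of "V \<times> V" "\<lambda>p. p \<in> P1 \<union> P2"] fV by simp
  qed
  also have "card (P1 \<union> P2) = card P1 + card P2"
  proof (rule card_Un_disjoint)
    show "finite P1" using fV S unfolding P1_def
      by (rule_tac rev_finite_subset[of "V \<times> V"]) auto
    show "finite P2" using fV S unfolding P2_def
      by (rule_tac rev_finite_subset[of "V \<times> V"]) auto
    show "P1 \<inter> P2 = {}" unfolding P1_def P2_def by auto
  qed
  also have "card P2 = card P1"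
  proof -
    have "bij_betw (\<lambda>(v,w). (w,v)) P1 P2"
      by (rule bij_betwI[where g="\<lambda>(v,w). (w,v)"]) (auto simp: P1_def P2_def insert_commute)
    thus ?thesis by (simp add: bij_betw_same_card)
  qed
  also have "card P1 = card (delta0 E S)"
  proof -
    have "bij_betw (\<lambda>(v,w). {v,w}) P1 (delta0 E S)"
    proof (rule bij_betwI')
      fix x y assume "x \<in> P1" "y \<in> P1"
      thus "((case x of (v, w) \<Rightarrow> {v, w}) = (case y of (v, w) \<Rightarrow> {v, w})) = (x = y)"
        unfolding P1_def by (auto simp: doubleton_eq_iff)
    next
      fix x assume "x \<in> P1"
      then obtain v w where x: "x = (v,w)" "v \<in> S" "w \<in> V - S" "{v,w} \<in> E" unfolding P1_def by auto
      have "{v,w} \<inter> S = {v}" using x by auto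
      thus "(case x of (v, w) \<Rightarrow> {v, w}) \<in> delta0 E S" using x unfolding delta0_def by simp
    next
      fix e assume e: "e \<in> delta0 E S"
      hence eE: "e \<in> E" and c1: "card (e \<inter> S) = 1" unfolding delta0_def by auto
      obtain x y where xy: "e = {x,y}" "x \<noteq> y" using edge2(2)[OF c eE] card_2_iff by metis
      have eV: "e \<subseteq> V" by (rule edge2(1)[OF c eE])
      have "(x \<in> S) \<noteq> (y \<in> S)"
      proof
        assume "(x \<in> S) = (y \<in> S)"
        hence "e \<inter> S = {} \<or> e \<inter> S = e" using xy by auto
        thus False using c1 xy by auto
      qed
      thus "\<exists>p\<in>P1. e = (case p of (v, w) \<Rightarrow> {v, w})"
      proof (cases "x \<in> S")
        case True thus ?thesis using \<open>(x \<in> S) \<noteq> (y \<in> S)\<close> xy eV eE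
          by (intro bexI[of _ "(x,y)"]) (auto simp: P1_def)
      next
        case False thus ?thesis using \<open>(x \<in> S) \<noteq> (y \<in> S)\<close> xy eV eE
          by (intro bexI[of _ "(y,x)"]) (auto simp: P1_def insert_commute)
      qed
    qed
    thus ?thesis by (rule bij_betw_same_card)
  qed
  finally show ?thesis by simp
qed

lemma delta0_compl:
  assumes c: "complex2 V E T" and S: "S \<subseteq> V"
  shows "delta0 E (V - S) = delta0 E S"
proof -
  { fix e assume eE: "e \<in> E"
    have eV: "e \<subseteq> V" and ce: "card e = 2" and fe: "finite e" using edge2[OF c eE] by auto
    have "e \<inter> (V - S) = e - (e \<inter> S)" using eV by auto
    hence "card (e \<inter> (V - S)) = 2 - card (e \<inter> S)" using fe ce by (simp add: card_Diff_subset)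
    moreover have "card (e \<inter> S) \<le> 2" using ce fe by (metis card_mono inf_le1)
    ultimately have "card (e \<inter> (V - S)) = 1 \<longleftrightarrow> card (e \<inter> S) = 1" by auto }
  thus ?thesis unfolding delta0_def by auto
qed

lemma small_cut1:
  assumes c: "complex2 V E T" and r: "regular2 V E T k0 k1" and a: "a \<in> V"
  shows "card (delta0 E {a}) = k0"
proof -
  have "delta0 E {a} = {e\<in>E. a \<in> e}" unfolding delta0_def
    by (auto simp: card_Suc_eq Int_insert_right split: if_splits)
  thus ?thesis using r a unfolding regular2_def by auto
qed

lemma small_cut2:
  assumes c: "complex2 V E T" and r: "regular2 V E T k0 k1" and a: "a \<in> V" "b \<in> V" "a \<noteq> b"
    and k: "2 \<le> k0"
  shows "k0 \<le> card (delta0 E {a,b})"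
proof -
  have fE: "finite E" by (rule finE(1)[OF c])
  define A where "A = {e\<in>E. a \<in> e} - {{a,b}}"
  define B where "B = {e\<in>E. b \<in> e} - {{a,b}}"
  have sub: "A \<union> B \<subseteq> delta0 E {a,b}"
  proof
    fix e assume e: "e \<in> A \<union> B"
    hence eE: "e \<in> E" and ne: "e \<noteq> {a,b}" unfolding A_def B_def by auto
    obtain x y where xy: "e = {x,y}" "x \<noteq> y" using edge2(2)[OF c eE] card_2_iff by metis
    have "e \<inter> {a,b} = {a} \<or> e \<inter> {a,b} = {b}" using e ne xy a(3) unfolding A_def B_def
      by (auto simp: doubleton_eq_iff)
    thus "e \<in> delta0 E {a,b}" using eE unfolding delta0_def by auto
  qed
  have disj: "A \<inter> B = {}"
  proof -
    { fix e assume "e \<in> A" "e \<in> B"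
      hence eE: "e \<in> E" and ab: "a \<in> e" "b \<in> e" and ne: "e \<noteq> {a,b}" unfolding A_def B_def by auto
      obtain x y where xy: "e = {x,y}" "x \<noteq> y" using edge2(2)[OF c eE] card_2_iff by metis
      have False using ab ne xy a(3) by auto }
    thus ?thesis by blast
  qed
  have cA: "card A + 1 \<ge> k0"
  proof -
    have "card {e\<in>E. a \<in> e} = k0" using r a unfolding regular2_def by auto
    moreover have "card {e\<in>E. a \<in> e} \<le> card A + 1" unfolding A_def
      by (metis (no_types, lifting) card_Diff_singleton_if fE finite_subset mem_Collect_eq subsetI
          le_diff_conv order_refl diff_le_self le_add1 add_le_mono)
    ultimately show ?thesis by simp
  qed
  have cB: "card B + 1 \<ge> k0"
  proof -
    have "card {e\<in>E. b \<in> e} = k0" using r a unfolding regular2_def by auto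
    moreover have "card {e\<in>E. b \<in> e} \<le> card B + 1" unfolding B_def
      by (metis (no_types, lifting) card_Diff_singleton_if fE finite_subset mem_Collect_eq subsetI
          le_diff_conv order_refl diff_le_self le_add1 add_le_mono)
    ultimately show ?thesis by simp
  qed
  have fA: "finite A" "finite B" unfolding A_def B_def using fE by auto
  have "card (A \<union> B) = card A + card B" by (rule card_Un_disjoint[OF fA disj])
  moreover have "card (A \<union> B) \<le> card (delta0 E {a,b})"
    by (rule card_mono[OF _ sub]) (use fE in \<open>auto simp: delta0_def\<close>)
  ultimately show ?thesis using cA cB k by linarith
qed




lemma enum_props: "finite V \<Longrightarrow> set (vertex_enum V) = V \<and> distinct (vertex_enum V)"
  unfolding vertex_enum_def by (rule someI_ex) (rule finite_distinct_list)

lemma spec_cut: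
  assumes c: "complex2 V E T" and r: "regular2 V E T k0 k1" and k: "k0 > 0"
    and S: "S \<subseteq> V" and s3: "3 \<le> card S" and sn: "card S + 3 \<le> card V" and n9: "9 \<le> card V"
    and small: "card (delta0 E S) < k0"
  shows "real k0 / 2 \<le> second_eigenvalue (adj_matrix V E)"
proof -
  define xs where "xs = vertex_enum V"
  have xs: "set xs = V" "distinct xs" using enum_props finE(2)[OF c] unfolding xs_def by auto
  define n where "n = length xs"
  have nV: "n = card V" using xs distinct_card n_def by metis
  have fV: "finite V" by (rule finE(2)[OF c])
  have bij: "bij_betw ((!) xs) {..<n} V" using bij_betw_nth[OF xs(2)] xs(1) n_def by auto
  have sr: "(\<Sum>i<n. g (xs!i)) = (\<Sum>v\<in>V. g v)" for g :: "'a \<Rightarrow> real"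
    using sum.reindex_bij_betw[OF bij] by simp
  have xsV: "i < n \<Longrightarrow> xs ! i \<in> V" for i using xs(1) n_def by auto
  define a where "a i j = adj E (xs!i) (xs!j)" for i j
  have adjm: "adj_matrix V E = mat n n (\<lambda>(i,j). a i j)"
    unfolding adj_matrix_def Let_def xs_def[symmetric] n_def a_def adj_def by simp
  define s where "s = card S"
  define cc where "cc = real s / real n"
  define X where "X v = (if v \<in> S then 1 else 0) - cc" for v
  define x where "x i = X (xs!i)" for i
  have npos: "real n > 0" using nV n9 by simp
  have sym: "\<And>i j. a i j = a j i" unfolding a_def by (rule adj_sym)
  have u: "\<forall>i<n. mv n a (\<lambda>_. 1) i = real k0 * 1"
  proof (intro allI impI)
    fix i assume i: "i < n"
    have "mv n a (\<lambda>_. 1) i = (\<Sum>w\<in>V. adj E (xs!i) w)"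
      unfolding mv_def a_def using sr[of "\<lambda>w. adj E (xs!i) w"] by simp
    also have "\<dots> = real k0" by (rule deg_sum[OF c r xsV[OF i]])
    finally show "mv n a (\<lambda>_. 1) i = real k0 * 1" by simp
  qed
  have uu: "ip n (\<lambda>_. 1) (\<lambda>_. 1) > 0" unfolding ip_def using npos by simp
  have mvx: "mv n a x i = (\<Sum>w\<in>V. adj E (xs!i) w * X w)" for i
    unfolding mv_def a_def x_def using sr[of "\<lambda>w. adj E (xs!i) w * X w"] by simp
  have sumS: "(\<Sum>v\<in>V. (if v \<in> S then 1 else 0 :: real)) = real s"
  proof -
    have "{v\<in>V. v \<in> S} = S" using S by auto
    thus ?thesis using sum_if_card_real[OF fV, of "\<lambda>v. v \<in> S"] s_def by simp
  qed
  have ipxu: "ip n x (\<lambda>_. 1) = 0"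
  proof -
    have "ip n x (\<lambda>_. 1) = (\<Sum>v\<in>V. X v)"
      unfolding ip_def x_def using sr[of X] by simp
    also have "\<dots> = real s - real (card V) * cc"
      unfolding X_def by (simp add: sum_subtractf sumS)
    also have "\<dots> = 0" unfolding cc_def nV[symmetric] using npos by simp
    finally show ?thesis .
  qed
  have sX2: "(\<Sum>v\<in>V. X v ^ 2) = real s * (real n - real s) / real n"
  proof -
    have "(\<Sum>v\<in>V. X v ^ 2) = (\<Sum>v\<in>V. if v \<in> S then (1 - cc)^2 else cc^2)"
      unfolding X_def by (intro sum.cong refl) auto
    also have "\<dots> = (\<Sum>v\<in>V \<inter> {v. v \<in> S}. (1 - cc)^2) + (\<Sum>v\<in>V \<inter> - {v. v \<in> S}. cc^2)"
      by (rule sum.If_cases[OF fV])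
    also have "V \<inter> {v. v \<in> S} = S" using S by auto
    also have "V \<inter> - {v. v \<in> S} = V - S" by auto
    finally have e0: "(\<Sum>v\<in>V. X v ^ 2) = (\<Sum>v\<in>S. (1 - cc)^2) + (\<Sum>v\<in>V - S. cc^2)" .
    have "card (V - S) = card V - card S" using S fV by (simp add: card_Diff_subset finite_subset)
    hence e: "(\<Sum>v\<in>V. X v ^ 2) = real s * (1 - cc)^2 + real (n - s) * cc^2"
      unfolding e0 s_def nV by simp
    have "real (n - s) = real n - real s" using sn nV s_def by simp
    with e have e2: "(\<Sum>v\<in>V. X v ^ 2) = real s * (1 - cc)^2 + (real n - real s) * cc^2" by simp
    define t where "t = real s"
    define m where "m = real n"
    have m0: "m > 0" using npos m_def by simp
    have "1 - t/m = (m - t)/m" using m0 by (simp add: field_simps)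
    hence "t * (1 - t/m)^2 + (m - t) * (t/m)^2 = t*(m-t)^2/m^2 + (m-t)*t^2/m^2"
      by (simp add: power_divide)
    also have "\<dots> = (t*(m-t)*((m-t)+t))/m^2"
      by (simp add: add_divide_distrib[symmetric] algebra_simps power2_eq_square)
    also have "\<dots> = t * (m - t) / m" using m0 by (simp add: power2_eq_square)
    finally show ?thesis unfolding e2 cc_def t_def[symmetric] m_def[symmetric] .
  qed
  have ipxx: "ip n x x = (\<Sum>v\<in>V. X v ^ 2)"
    unfolding ip_def x_def using sr[of "\<lambda>v. X v * X v"] by (simp add: power2_eq_square)
  have big: "(\<Sum>v\<in>V. X v ^ 2) \<ge> 2"
  proof -
    have "real s * (real n - real s) \<ge> 2 * real n"
    proof -
      have "(real s - 3) * (real n - 3 - real s) \<ge> 0" using s3 sn nV s_def by simp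
      moreover have "3 * (real n - 3) \<ge> 2 * real n" using n9 nV by simp
      ultimately show ?thesis by (simp add: algebra_simps)
    qed
    thus ?thesis unfolding sX2 using npos by (simp add: le_divide_eq)
  qed
  have quad: "ip n x (mv n a x) = real k0 * (\<Sum>v\<in>V. X v ^ 2) - real (card (delta0 E S))"
  proof -
    have "ip n x (mv n a x) = (\<Sum>v\<in>V. X v * (\<Sum>w\<in>V. adj E v w * X w))"
      unfolding ip_def mvx x_def using sr[of "\<lambda>v. X v * (\<Sum>w\<in>V. adj E v w * X w)"] by simp
    also have "\<dots> = (\<Sum>v\<in>V. \<Sum>w\<in>V. adj E v w * X v * X w)"
      by (simp add: sum_distrib_left algebra_simps)
    also have "\<dots> = k0 * (\<Sum>v\<in>V. X v ^ 2) - (1/2) * (\<Sum>v\<in>V. \<Sum>w\<in>V. adj E v w * (X v - X w)^2)"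
      by (rule quad_id[OF c r])
    also have "(\<Sum>v\<in>V. \<Sum>w\<in>V. adj E v w * (X v - X w)^2) = 2 * real (card (delta0 E S))"
      unfolding X_def using cut_pairs[OF c S] by simp
    finally show ?thesis by simp
  qed
  have ray: "ip n x (mv n a x) \<ge> (real k0 / 2) * ip n x x"
  proof -
    have "real k0 / 2 * (\<Sum>v\<in>V. X v ^ 2) \<ge> real k0 / 2 * 2" by (rule mult_left_mono[OF big]) simp
    hence "real k0 / 2 * (\<Sum>v\<in>V. X v ^ 2) \<ge> real k0" by simp
    hence "real k0 / 2 * (\<Sum>v\<in>V. X v ^ 2) \<ge> real (card (delta0 E S))" using small by linarith
    thus ?thesis unfolding quad ipxx by simp
  qed
  have "real k0 / 2 \<le> second_eigenvalue (mat n n (\<lambda>(i,j). a i j))"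
    by (rule spectral_bound[OF sym u uu _ ipxu _ ray]) (use big ipxx in auto)
  thus ?thesis unfolding adjm .
qed

lemma small_cut:
  assumes c: "complex2 V E T" and r: "regular2 V E T k0 k1" and S: "S \<subseteq> V"
    and s1: "1 \<le> card S" and s2: "card S \<le> 2" and k: "2 \<le> k0"
  shows "k0 \<le> card (delta0 E S)"
proof (cases "card S = 1")
  case True
  then obtain a where "S = {a}" by (auto simp: card_1_singleton_iff)
  thus ?thesis using small_cut1[OF c r] S by auto
next
  case False
  hence "card S = 2" using s1 s2 by simp
  then obtain a b where "S = {a,b}" "a \<noteq> b" by (auto simp: card_2_iff)
  thus ?thesis using small_cut2[OF c r _ _ _ k] S by auto
qed

lemma cut_ge:
  assumes c: "complex2 V E T" and r: "regular2 V E T k0 k1" and n9: "9 \<le> card V"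
    and sec: "k0 > 0 \<Longrightarrow> second_eigenvalue (adj_matrix V E) < real k0 / 2"
    and S: "S \<subseteq> V" and ne: "delta0 E S \<noteq> {}"
  shows "k0 \<le> card (delta0 E S)"
proof (cases "k0 \<le> 1")
  case True
  have "finite (delta0 E S)" using finE(1)[OF c] unfolding delta0_def by auto
  hence "card (delta0 E S) \<ge> 1" using ne by (simp add: Suc_le_eq card_gt_0_iff)
  thus ?thesis using True by simp
next
  case False
  hence k2: "2 \<le> k0" by simp
  have fV: "finite V" by (rule finE(2)[OF c])
  have Sne: "S \<noteq> {}" using ne unfolding delta0_def by auto
  have SV: "S \<noteq> V"
  proof
    assume "S = V"
    have "delta0 E V = {}" unfolding delta0_def
    proof (auto)
      fix e assume eE: "e \<in> E" and c1: "card (e \<inter> V) = Suc 0"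
      have "e \<inter> V = e" using edge2(1)[OF c eE] by auto
      thus False using c1 edge2(2)[OF c eE] by simp
    qed
    thus False using ne \<open>S = V\<close> by simp
  qed
  have s1: "1 \<le> card S" using Sne fV S by (simp add: Suc_le_eq card_gt_0_iff finite_subset)
  have sV: "card S < card V" using S SV fV by (simp add: psubset_card_mono)
  have cD: "card (V - S) = card V - card S" using S fV by (simp add: card_Diff_subset finite_subset)
  show ?thesis
  proof (cases "card S \<le> 2")
    case True thus ?thesis using small_cut[OF c r S s1 True k2] by simp
  next
    case F1: False
    show ?thesis
    proof (cases "card V \<le> card S + 2")
      case True
      have "k0 \<le> card (delta0 E (V - S))"
        by (rule small_cut[OF c r _ _ _ k2]) (use True sV cD in auto)
      thus ?thesis using delta0_compl[OF c S] by simp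
    next
      case False
      show ?thesis
      proof (rule ccontr)
        assume "\<not> k0 \<le> card (delta0 E S)"
        hence sm: "card (delta0 E S) < k0" by simp
        have "real k0 / 2 \<le> second_eigenvalue (adj_matrix V E)"
          by (rule spec_cut[OF c r _ S _ _ n9 sm]) (use F1 False k2 in auto)
        thus False using sec k2 by simp
      qed
    qed
  qed
qed

lemma handshake:
  assumes c: "complex2 V E T" and r: "regular2 V E T k0 k1"
  shows "2 * card E = card V * k0"
proof -
  have fV: "finite V" and fE: "finite E" using finE[OF c] by auto
  have "card V * k0 = (\<Sum>v\<in>V. card {e\<in>E. v \<in> e})" using r unfolding regular2_def by simp
  also have "\<dots> = (\<Sum>v\<in>V. \<Sum>e\<in>E. if v \<in> e then 1 else 0)"
    using sum_if_card_nat[OF fE] by simp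
  also have "\<dots> = (\<Sum>e\<in>E. \<Sum>v\<in>V. if v \<in> e then 1 else 0)" by (rule sum.swap)
  also have "\<dots> = (\<Sum>e\<in>E. card {v\<in>V. v \<in> e})" using sum_if_card_nat[OF fV] by simp
  also have "\<dots> = (\<Sum>e\<in>E. 2)"
  proof (rule sum.cong[OF refl])
    fix e assume "e \<in> E"
    hence "{v\<in>V. v \<in> e} = e" "card e = 2" using edge2[OF c] by auto
    thus "card {v\<in>V. v \<in> e} = 2" by simp
  qed
  finally show ?thesis by simp
qed

lemma sdist_ge: "finite B \<Longrightarrow> finite A \<Longrightarrow> card B \<le> sdist A B + card A"
proof -
  assume f: "finite B" "finite A"
  have "card B \<le> card ((B - A) \<union> A)" by (rule card_mono) (use f in auto)
  also have "\<dots> \<le> card (B - A) + card A" by (rule card_Un_le)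
  finally show ?thesis unfolding sdist_def by simp
qed

theorem lemma3p8:
  shows "\<forall>(mu::real) (lam::real). \<exists>N::nat.
    \<forall>(V::'a set) E T k0 k1 (eps::real) (eta::real) F.
      complex2 V E T \<and> regular2 V E T k0 k1 \<and> cosystolic_expander V E T k0 k1 eps mu \<and>
      1/2 < eta \<and> eta < 1 \<and> F \<subseteq> E \<and>
      lambda2_norm V E k0 = lam \<and> lam < 1/2 \<and> card V \<ge> N \<longrightarrow>
      (\<forall>v\<in>V. real k0 / 2 < real (card (local_view F v)) \<and>
               real (card (local_view F v)) \<le> eta * real k0 \<longrightarrow>
               real (card (delta1 T (local_view F v))) \<ge> eps * real k1 * (1 - eta) * real k0) \<and>
      (\<forall>v\<in>V. real (card (local_view F v)) \<le> real k0 / 2 \<longrightarrow>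
               real (card (delta1 T (local_view F v))) \<ge> eps * real k1 * real (card (local_view F v)))"
proof (intro allI)
  fix mu lam :: real
  show "\<exists>N::nat.
    \<forall>(V::'a set) E T k0 k1 (eps::real) (eta::real) F.
      complex2 V E T \<and> regular2 V E T k0 k1 \<and> cosystolic_expander V E T k0 k1 eps mu \<and>
      1/2 < eta \<and> eta < 1 \<and> F \<subseteq> E \<and>
      lambda2_norm V E k0 = lam \<and> lam < 1/2 \<and> card V \<ge> N \<longrightarrow>
      (\<forall>v\<in>V. real k0 / 2 < real (card (local_view F v)) \<and>
               real (card (local_view F v)) \<le> eta * real k0 \<longrightarrow>
               real (card (delta1 T (local_view F v))) \<ge> eps * real k1 * (1 - eta) * real k0) \<and>
      (\<forall>v\<in>V. real (card (local_view F v)) \<le> real k0 / 2 \<longrightarrow>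
               real (card (delta1 T (local_view F v))) \<ge> eps * real k1 * real (card (local_view F v)))"
  proof (rule exI[of _ "9 + nat \<lceil>4 / mu\<rceil>"], intro allI impI)
    fix V :: "'a set" and E T k0 k1 and eps eta :: real and F
    assume H: "complex2 V E T \<and> regular2 V E T k0 k1 \<and> cosystolic_expander V E T k0 k1 eps mu \<and>
      1/2 < eta \<and> eta < 1 \<and> F \<subseteq> E \<and>
      lambda2_norm V E k0 = lam \<and> lam < 1/2 \<and> card V \<ge> 9 + nat \<lceil>4 / mu\<rceil>"
    have c: "complex2 V E T" and r: "regular2 V E T k0 k1" and cx: "cosystolic_expander V E T k0 k1 eps mu"
      and eta1: "1/2 < eta" and eta2: "eta < 1" and FE: "F \<subseteq> E"
      and lamd: "lambda2_norm V E k0 = lam" and lam2: "lam < 1/2" and nN: "card V \<ge> 9 + nat \<lceil>4 / mu\<rceil>"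
      using H by auto
    have mu: "mu > 0" and eps: "eps > 0" using cx unfolding cosystolic_expander_def by auto
    have cx1: "\<And>S. S \<subseteq> E \<Longrightarrow> delta1 T S = {} \<Longrightarrow> S \<in> B1 V E \<or> real (card S) \<ge> mu * real (card E)"
      using cx unfolding cosystolic_expander_def by blast
    have cx2: "\<And>S. S \<subseteq> E \<Longrightarrow> delta1 T S \<noteq> {} \<Longrightarrow>
           real (card (delta1 T S)) / real (sdist_fam S (Z1 E T)) \<ge> eps * real k1"
      using cx unfolding cosystolic_expander_def by blast
    have fV: "finite V" and fE: "finite E" using finE[OF c] by auto
    have n9: "9 \<le> card V" using nN by simp
    have nmu: "real (card V) \<ge> 4 / mu"
    proof -
      have "4 / mu \<le> real (nat \<lceil>4 / mu\<rceil>)" by linarith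
      thus ?thesis using nN by linarith
    qed
    have sec: "second_eigenvalue (adj_matrix V E) < real k0 / 2" if "k0 > 0"
    proof -
      have "second_eigenvalue (adj_matrix V E) / real k0 < 1/2"
        using lamd lam2 unfolding lambda2_norm_def by simp
      thus ?thesis using that by (simp add: divide_less_eq)
    qed
    have muE: "mu * real (card E) \<ge> 2 * real k0"
    proof -
      have "real (2 * card E) = real (card V * k0)" using handshake[OF c r] by simp
      hence h: "2 * real (card E) = real (card V) * real k0" by simp
      moreover have "mu * real (card V) \<ge> 4" using nmu mu by (simp add: divide_le_eq mult.commute)
      ultimately have "mu * (2 * real (card E)) \<ge> 4 * real k0"
      proof -
        assume h: "2 * real (card E) = real (card V) * real k0" and m4: "mu * real (card V) \<ge> 4"
        have "mu * (2 * real (card E)) = (mu * real (card V)) * real k0" using h by simp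
        also have "\<dots> \<ge> 4 * real k0" by (rule mult_right_mono[OF m4]) simp
        finally show ?thesis .
      qed
      thus ?thesis by linarith
    qed
    have finZ1: "finite (Z1 E T)" unfolding Z1_def using fE
      by (rule_tac rev_finite_subset[of "Pow E"]) auto
    have emZ1: "{} \<in> Z1 E T" unfolding Z1_def delta1_def by simp
    have key: "min (card (local_view F v)) (k0 - card (local_view F v)) \<le> sdist_fam (local_view F v) (Z1 E T)"
      if v: "v \<in> V" for v
    proof -
      define Fv where "Fv = local_view F v"
      define f where "f = card Fv"
      have FvE: "Fv \<subseteq> E" using FE unfolding Fv_def local_view_def by auto
      have fFv: "finite Fv" using FvE fE by (rule finite_subset)
      have "Fv \<subseteq> {e\<in>E. v \<in> e}" using FE unfolding Fv_def local_view_def by auto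
      hence "f \<le> card {e\<in>E. v \<in> e}" unfolding f_def by (rule card_mono[rotated]) (use fE in auto)
      hence fk: "f \<le> k0" using r v unfolding regular2_def by auto
      have "\<forall>Z\<in>Z1 E T. min f (k0 - f) \<le> sdist Fv Z"
      proof
        fix Z assume Z: "Z \<in> Z1 E T"
        hence ZE: "Z \<subseteq> E" and dZ: "delta1 T Z = {}" unfolding Z1_def by auto
        have fZ: "finite Z" using ZE fE by (rule finite_subset)
        show "min f (k0 - f) \<le> sdist Fv Z"
        proof (cases "Z = {}")
          case True thus ?thesis unfolding sdist_def f_def by simp
        next
          case False
          have "k0 \<le> card Z"
          proof (cases "k0 = 0")
            case False
            from cx1[OF ZE dZ] show ?thesis
            proof
              assume "Z \<in> B1 V E"
              then obtain S where S: "S \<subseteq> V" "Z = delta0 E S" unfolding B1_def by auto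
              show ?thesis using cut_ge[OF c r n9 sec S(1)] S \<open>Z \<noteq> {}\<close> by simp
            next
              assume "real (card Z) \<ge> mu * real (card E)"
              thus ?thesis using muE by linarith
            qed
          qed simp
          moreover have "card Z \<le> sdist Fv Z + f" unfolding f_def by (rule sdist_ge[OF fZ fFv])
          ultimately show ?thesis by linarith
        qed
      qed
      hence "min f (k0 - f) \<le> Min ((\<lambda>B. sdist Fv B) ` Z1 E T)"
        using finZ1 emZ1 by (subst Min_ge_iff) auto
      thus ?thesis unfolding sdist_fam_def Fv_def f_def by simp
    qed
    have zero: "sdist_fam (local_view F v) (Z1 E T) = 0" if "delta1 T (local_view F v) = {}" for v
    proof -
      have "local_view F v \<in> Z1 E T" using that FE unfolding Z1_def local_view_def by auto
      hence "Min ((\<lambda>B. sdist (local_view F v) B) ` Z1 E T) \<le> sdist (local_view F v) (local_view F v)"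
        using finZ1 by (intro Min_le) auto
      thus ?thesis unfolding sdist_fam_def sdist_def by simp
    qed
    have bound: "real (card (delta1 T (local_view F v))) \<ge> eps * real k1 * real (sdist_fam (local_view F v) (Z1 E T))"
      if "sdist_fam (local_view F v) (Z1 E T) > 0" for v
    proof -
      have "delta1 T (local_view F v) \<noteq> {}" using zero that by fastforce
      moreover have "local_view F v \<subseteq> E" using FE unfolding local_view_def by auto
      ultimately have "real (card (delta1 T (local_view F v))) / real (sdist_fam (local_view F v) (Z1 E T)) \<ge> eps * real k1"
        using cx2 by blast
      thus ?thesis using that by (simp add: le_divide_eq)
    qed
    have ek: "eps * real k1 \<ge> 0" using eps by simp
    show "(\<forall>v\<in>V. real k0 / 2 < real (card (local_view F v)) \<and>
               real (card (local_view F v)) \<le> eta * real k0 \<longrightarrow>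
               real (card (delta1 T (local_view F v))) \<ge> eps * real k1 * (1 - eta) * real k0) \<and>
      (\<forall>v\<in>V. real (card (local_view F v)) \<le> real k0 / 2 \<longrightarrow>
               real (card (delta1 T (local_view F v))) \<ge> eps * real k1 * real (card (local_view F v)))"
    proof (intro conjI ballI impI)
      fix v assume v: "v \<in> V" and fat: "real k0 / 2 < real (card (local_view F v)) \<and>
               real (card (local_view F v)) \<le> eta * real k0"
      define f where "f = card (local_view F v)"
      define D where "D = sdist_fam (local_view F v) (Z1 E T)"
      have f1: "real k0 / 2 < real f" and f2: "real f \<le> eta * real k0" using fat f_def by auto
      have k0: "k0 > 0" using f1 f2 eta1 by (cases "k0 = 0") auto
      have "eta * real k0 < real k0" using eta2 k0 by simp
      hence "real f < real k0" using f2 by linarith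
      hence fk: "f < k0" by simp
      have m: "min f (k0 - f) = k0 - f" using f1 by simp
      have mD: "k0 - f \<le> D" using key[OF v] m unfolding D_def f_def by simp
      have Dp: "D > 0" using mD fk by simp
      have "real (k0 - f) \<ge> (1 - eta) * real k0" using fk f2 by (simp add: of_nat_diff algebra_simps)
      hence "real D \<ge> (1 - eta) * real k0" using mD by (meson of_nat_le_iff order_trans)
      hence "eps * real k1 * real D \<ge> eps * real k1 * ((1 - eta) * real k0)"
        using ek by (rule mult_left_mono)
      moreover have "real (card (delta1 T (local_view F v))) \<ge> eps * real k1 * real D"
        using bound Dp unfolding D_def by blast
      ultimately show "real (card (delta1 T (local_view F v))) \<ge> eps * real k1 * (1 - eta) * real k0"
        by (simp add: mult.assoc)
    next
      fix v assume v: "v \<in> V" and nf: "real (card (local_view F v)) \<le> real k0 / 2"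
      define f where "f = card (local_view F v)"
      define D where "D = sdist_fam (local_view F v) (Z1 E T)"
      have m: "min f (k0 - f) = f" using nf unfolding f_def by simp
      have mD: "f \<le> D" using key[OF v] m unfolding D_def f_def by simp
      show "real (card (delta1 T (local_view F v))) \<ge> eps * real k1 * real (card (local_view F v))"
      proof (cases "D = 0")
        case True thus ?thesis using mD f_def by simp
      next
        case False
        hence "real (card (delta1 T (local_view F v))) \<ge> eps * real k1 * real D"
          using bound unfolding D_def by blast
        moreover have "eps * real k1 * real D \<ge> eps * real k1 * real f"
          using ek mD by (simp add: mult_left_mono)
        ultimately show ?thesis unfolding f_def by linarith
      qed
    qed
  qed
qed


end
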